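(* Let $a>0$ with $2a/\sqrt{3}<\pi/2$, and let $(T,g_{hex})$ be the singular torus defined below. Then the systole of $(T,g_{hex})$ equals $\min\{4a,\ 2\pi\cos(2a/\sqrt{3})\}$.
   Context: Let $\Delta\subset\mathbb{R}^2$ be the hexagonal lattice generated by $(2a,0)$ and $(a,a\sqrt3)$ (its Voronoi cells are regular hexagons of inradius $a$ and circumradius $2a/\sqrt3$). On $\mathbb{R}^3$ with coordinates $(x,y,z)$ consider the continuous Riemannian metric $h=dx^2+dy^2+\cos^2\!\big(\mathrm{dist}((x,y),\Delta)\big)\,dz^2$, where $\mathrm{dist}$ is the Euclidean distance in $\mathbb{R}^2$. The length of a piecewise smooth curve $\gamma$ is $\int (h(\gamma',\gamma'))^{1/2}dt$. $(T,g_{hex})$ is the quotient of $(\mathbb{R}^3,h)$ by the group generated by the translations $T_1:(x,y,z)\mapsto(x+4a,y,z)$, $T_2:(x,y,z)\mapsto(x+2a,y+2a\sqrt3,z)$, $T_3:(x,y,z)\mapsto(x,y,z+2\pi)$; $h$ descends to a metric $g_{hex}$. The systole is the infimum of the lengths of non-contractible piecewise smooth closed curves. *)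

theory Defs
  imports "HOL-Analysis.Analysis"
begin

definition hex_lattice :: "real \<Rightarrow> (real \<times> real) set" where
  "hex_lattice a = {(of_int i * (2 * a) + of_int j * a, of_int j * (a * sqrt 3)) | i j :: int. True}"

definition hex_speed :: "real \<Rightarrow> real \<times> real \<times> real \<Rightarrow> real \<times> real \<times> real \<Rightarrow> real" where
  "hex_speed a p v = (case p of (x, y, z) \<Rightarrow> case v of (dx, dy, dz) \<Rightarrow>
      sqrt (dx\<^sup>2 + dy\<^sup>2 + (cos (infdist (x, y) (hex_lattice a)))\<^sup>2 * dz\<^sup>2))"

definition piecewise_smooth :: "(real \<Rightarrow> real \<times> real \<times> real) \<Rightarrow> bool" where
  "piecewise_smooth \<gamma> \<longleftrightarrow>
     (\<exists>(n::nat) (t::nat \<Rightarrow> real). n > 0 \<and> t 0 = 0 \<and> t n = 1 \<and> (\<forall>i<n. t i < t (Suc i)) \<and>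
        (\<forall>i<n. \<exists>D. continuous_on {t i..t (Suc i)} D \<and>
           (\<forall>s\<in>{t i..t (Suc i)}. (\<gamma> has_vector_derivative D s) (at s within {t i..t (Suc i)}))))"

definition hex_length :: "real \<Rightarrow> (real \<Rightarrow> real \<times> real \<times> real) \<Rightarrow> real" where
  "hex_length a \<gamma> = integral {0..1} (\<lambda>t. hex_speed a (\<gamma> t) (vector_derivative \<gamma> (at t)))"

text \<open>The torus T = R^3 / <T1,T2,T3>, realised concretely as a subset of C^3
  via the covering map (x,y,z) \<mapsto> (e^{2 pi i u}, e^{2 pi i v}, e^{i z}),
  where (x,y) = u (4a,0) + v (2a, 2a sqrt 3).  This map induces a homeomorphism
  of the quotient R^3/Gamma onto its image.\<close>
definition torus_proj :: "real \<Rightarrow> real \<times> real \<times> real \<Rightarrow> complex \<times> complex \<times> complex" where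
  "torus_proj a p = (case p of (x, y, z) \<Rightarrow>
     (cis (2 * pi * ((x - y / sqrt 3) / (4 * a))),
      cis (2 * pi * (y / (2 * a * sqrt 3))),
      cis z))"

definition torus_space :: "real \<Rightarrow> (complex \<times> complex \<times> complex) set" where
  "torus_space a = range (torus_proj a)"

text \<open>A piecewise smooth closed curve in T is
  the projection of a piecewise smooth curve gamma in R^3 whose endpoints have the
  same image; its length is the h-length of gamma (independent of the lift since
  deck translations are h-isometries).\<close>
definition systole_hex :: "real \<Rightarrow> real" where
  "systole_hex a = Inf {hex_length a \<gamma> | \<gamma>.
      piecewise_smooth \<gamma> \<and>
      torus_proj a (\<gamma> 0) = torus_proj a (\<gamma> 1) \<and>
      \<not> homotopic_loops (torus_space a) (torus_proj a \<circ> \<gamma>)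
           (linepath (torus_proj a (\<gamma> 0)) (torus_proj a (\<gamma> 0)))}"

end

theory Submission
  imports Defs "HOL-Complex_Analysis.Complex_Analysis"
begin

lemma circle_noncontr:
  fixes g :: "real \<Rightarrow> 'a::real_normed_vector"
  assumes h: "homotopic_loops S g (linepath p p)" and cf: "continuous_on S f" and sub: "f \<in> S \<rightarrow> -{0}"
    and g: "\<And>t. f (g t) = cis (2*pi*t)"
  shows False
proof -
  have "homotopic_loops (-{0}) (f \<circ> g) (f \<circ> linepath p p)"
    by (rule homotopic_loops_continuous_image[OF h cf sub])
  moreover have "f \<circ> g = circlepath 0 1"
    using g by (auto simp: circlepath cis_conv_exp o_def mult_ac)
  moreover have "f \<circ> linepath p p = linepath (f p) (f p)"
    by (auto simp: linepath_def o_def algebra_simps)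
  moreover have "p \<in> S"
    using homotopic_loops_imp_subset[OF h] by (auto simp: path_image_def linepath_def)
  then have "f p \<noteq> 0" using sub by auto
  ultimately have "winding_number (circlepath 0 1) 0 = winding_number (linepath (f p) (f p)) 0"
    using winding_number_homotopic_loops by metis
  then show False using \<open>f p \<noteq> 0\<close> by (simp add: winding_number_circlepath_centre)
qed


lemma hex_speed_alt: "hex_speed a p v = sqrt ((fst v)\<^sup>2 + (fst (snd v))\<^sup>2 +
   (cos (infdist (fst p, fst (snd p)) (hex_lattice a)))\<^sup>2 * (snd (snd v))\<^sup>2)"
  by (simp add: hex_speed_def split: prod.split)

lemma piece_bound:
  fixes \<gamma> :: "real \<Rightarrow> real \<times> real \<times> real" and \<phi> :: "real \<times> real \<times> real \<Rightarrow> real"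
  assumes ab: "a' < b" and cD: "continuous_on {a'..b} D"
    and der: "\<And>s. s \<in> {a'..b} \<Longrightarrow> (\<gamma> has_vector_derivative D s) (at s within {a'..b})"
    and lin: "bounded_linear \<phi>" and bd: "\<And>p v. \<phi> v \<le> K * hex_speed a p v"
  shows "(\<lambda>t. hex_speed a (\<gamma> t) (vector_derivative \<gamma> (at t))) integrable_on {a'..b} \<and>
         \<phi> (\<gamma> b) - \<phi> (\<gamma> a') \<le> K * integral {a'..b} (\<lambda>t. hex_speed a (\<gamma> t) (vector_derivative \<gamma> (at t)))"
proof -
  define h where "h s = hex_speed a (\<gamma> s) (D s)" for s
  have cg: "continuous_on {a'..b} \<gamma>"
    using der has_vector_derivative_continuous continuous_on_eq_continuous_within by blast
  have ch: "continuous_on {a'..b} h"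
    unfolding h_def hex_speed_alt
    by (intro continuous_intros cg cD continuous_on_fst continuous_on_snd)
  have hint: "(h has_integral integral {a'..b} h) {a'..b}"
    using integrable_continuous_real[OF ch] by blast
  have eq: "hex_speed a (\<gamma> t) (vector_derivative \<gamma> (at t)) = h t" if "t \<in> box a' b" for t
  proof -
    have "(\<gamma> has_vector_derivative D t) (at t)"
      using der[of t] that at_within_Icc_at[of a' t b] by auto
    then show ?thesis unfolding h_def by (simp add: vector_derivative_at)
  qed
  have gint: "((\<lambda>t. hex_speed a (\<gamma> t) (vector_derivative \<gamma> (at t))) has_integral integral {a'..b} h) {a'..b}"
    using has_integral_spike_interior[of h _ a' b] hint eq by auto
  have ftc: "((\<lambda>s. \<phi> (D s)) has_integral (\<phi> (\<gamma> b) - \<phi> (\<gamma> a'))) {a'..b}"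
    by (rule fundamental_theorem_of_calculus[where f="\<lambda>s. \<phi> (\<gamma> s)"])
       (use ab der bounded_linear.has_vector_derivative[OF lin] in auto)
  have "\<phi> (\<gamma> b) - \<phi> (\<gamma> a') \<le> K * integral {a'..b} h"
    by (rule has_integral_le[OF ftc has_integral_mult_right[OF hint]]) (simp add: h_def bd)
  moreover have "integral {a'..b} (\<lambda>t. hex_speed a (\<gamma> t) (vector_derivative \<gamma> (at t))) = integral {a'..b} h"
    using gint by (rule integral_unique)
  ultimately show ?thesis using gint by auto
qed

lemma part_mono:
  fixes t :: "nat \<Rightarrow> real"
  assumes "\<forall>i<n. t i < t (Suc i)" "k \<le> n"
  shows "t 0 \<le> t k"
  using assms(2)
proof (induction k)
  case (Suc k)
  then show ?case using assms(1) by (metis Suc_le_lessD less_imp_le_nat order.strict_implies_order order_trans)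
qed simp

lemma length_bound:
  fixes \<gamma> :: "real \<Rightarrow> real \<times> real \<times> real" and \<phi> :: "real \<times> real \<times> real \<Rightarrow> real"
  assumes ps: "piecewise_smooth \<gamma>" and lin: "bounded_linear \<phi>" and bd: "\<And>p v. \<phi> v \<le> K * hex_speed a p v"
  shows "\<phi> (\<gamma> 1) - \<phi> (\<gamma> 0) \<le> K * hex_length a \<gamma>"
proof -
  define g where "g t = hex_speed a (\<gamma> t) (vector_derivative \<gamma> (at t))" for t
  obtain n t where n: "n > 0" "t 0 = 0" "t n = 1" "\<forall>i<n. t i < t (Suc i)"
    and pc: "\<forall>i<n. \<exists>D. continuous_on {t i..t (Suc i)} D \<and>
           (\<forall>s\<in>{t i..t (Suc i)}. (\<gamma> has_vector_derivative D s) (at s within {t i..t (Suc i)}))"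
    using ps unfolding piecewise_smooth_def by blast
  have "k \<le> n \<Longrightarrow> g integrable_on {0..t k} \<and> \<phi> (\<gamma> (t k)) - \<phi> (\<gamma> 0) \<le> K * integral {0..t k} g" for k
  proof (induction k)
    case 0
    have "g integrable_on cbox 0 0" by (rule integrable_on_refl)
    then show ?case using n by simp
  next
    case (Suc k)
    then have k: "k < n" by simp
    then obtain D where D: "continuous_on {t k..t (Suc k)} D"
      "\<And>s. s\<in>{t k..t (Suc k)} \<Longrightarrow> (\<gamma> has_vector_derivative D s) (at s within {t k..t (Suc k)})"
      using pc by blast
    have P: "g integrable_on {t k..t (Suc k)} \<and> \<phi> (\<gamma> (t (Suc k))) - \<phi> (\<gamma> (t k)) \<le> K * integral {t k..t (Suc k)} g"
      unfolding g_def by (rule piece_bound[OF _ D(1) D(2) lin bd]) (use n k in auto)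
    have IH: "g integrable_on {0..t k} \<and> \<phi> (\<gamma> (t k)) - \<phi> (\<gamma> 0) \<le> K * integral {0..t k} g"
      using Suc k by simp
    have le1: "0 \<le> t k" using part_mono[OF n(4), of k] k n(2) by simp
    have le2: "t k \<le> t (Suc k)" using n(4) k by (simp add: less_imp_le)
    have int: "g integrable_on {0..t (Suc k)}"
      using Henstock_Kurzweil_Integration.integrable_combine[OF le1 le2] IH P by blast
    have "integral {0..t k} g + integral {t k..t (Suc k)} g = integral {0..t (Suc k)} g"
      by (rule Henstock_Kurzweil_Integration.integral_combine[OF le1 le2 int])
    then have "K * integral {0..t (Suc k)} g = K * integral {0..t k} g + K * integral {t k..t (Suc k)} g"
      by (metis distrib_left)
    then show ?case using int IH P by linarith
  qed
  from this[of n] show ?thesis using n unfolding hex_length_def g_def by simp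
qed

lemma ps_cont:
  assumes ps: "piecewise_smooth \<gamma>"
  shows "continuous_on {0..1} \<gamma>"
proof -
  obtain n t where n: "n > 0" "t 0 = 0" "t n = 1" "\<forall>i<n. t i < t (Suc i)"
    and pc: "\<forall>i<n. \<exists>D. continuous_on {t i..t (Suc i)} D \<and>
           (\<forall>s\<in>{t i..t (Suc i)}. (\<gamma> has_vector_derivative D s) (at s within {t i..t (Suc i)}))"
    using ps unfolding piecewise_smooth_def by blast
  have "k \<le> n \<Longrightarrow> continuous_on {0..t k} \<gamma>" for k
  proof (induction k)
    case 0
    then show ?case using n by simp
  next
    case (Suc k)
    then have k: "k < n" by simp
    then obtain D where D: 
      "\<And>s. s\<in>{t k..t (Suc k)} \<Longrightarrow> (\<gamma> has_vector_derivative D s) (at s within {t k..t (Suc k)})"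
      using pc by blast
    have c2: "continuous_on {t k..t (Suc k)} \<gamma>"
      using D has_vector_derivative_continuous continuous_on_eq_continuous_within by blast
    have le1: "0 \<le> t k" using part_mono[OF n(4), of k] k n(2) by simp
    have le2: "t k \<le> t (Suc k)" using n(4) k by (simp add: less_imp_le)
    have "{0..t (Suc k)} = {0..t k} \<union> {t k..t (Suc k)}" using le1 le2 by auto
    then show ?case using continuous_on_closed_Un[OF _ _ _ c2, of "{0..t k}"] Suc k by simp
  qed
  from this[of n] show ?thesis using n by simp
qed



lemma dist_pair2: "dist (x::real, y::real) (u, v) = sqrt ((x - u)\<^sup>2 + (y - v)\<^sup>2)"
  by (simp add: dist_Pair_Pair dist_real_def)

lemma tri:
  fixes s e a :: real
  assumes "0 \<le> s" "s \<le> a" "0 \<le> e" "s + sqrt 3 * e \<le> 2 * a"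
  shows "s\<^sup>2 + e\<^sup>2 \<le> (2 * a / sqrt 3)\<^sup>2"
proof -
  have "(sqrt 3 * e)\<^sup>2 \<le> (2 * a - s)\<^sup>2"
    by (rule power_mono) (use assms in auto)
  then have 1: "3 * e\<^sup>2 \<le> (2 * a - s)\<^sup>2" by (simp add: power_mult_distrib)
  have 2: "s * s \<le> a * s" using assms by (simp add: mult_right_mono)
  have 3: "(2 * a / sqrt 3)\<^sup>2 = 4 * a\<^sup>2 / 3" by (simp add: power_divide power_mult_distrib)
  show ?thesis unfolding 3 using 1 2 by (simp add: power2_eq_square algebra_simps)
qed

lemma in_lat: "(of_int i * (2 * a) + of_int j * a, of_int j * (a * sqrt 3)) \<in> hex_lattice a"
  unfolding hex_lattice_def by blast

lemma cover:
  fixes a :: real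
  assumes a: "a > 0"
  shows "infdist p (hex_lattice a) \<le> 2 * a / sqrt 3"
proof -
  obtain x y where p: "p = (x, y)" by (cases p)
  define h where "h = a * sqrt 3"
  have hpos: "h > 0" using a by (simp add: h_def)
  have s3h: "sqrt 3 * h = 3 * a" by (simp add: h_def)
  define j where "j = \<lfloor>y / h\<rfloor>"
  define e where "e = y - of_int j * h"
  have "of_int j \<le> y / h" "y / h < of_int j + 1" unfolding j_def by linarith+
  then have e: "0 \<le> e" "e < h" unfolding e_def using hpos by (auto simp: field_simps)
  define i where "i = \<lfloor>(x - a * of_int j + a) / (2 * a)\<rfloor>"
  define \<xi> where "\<xi> = x - a * of_int j - 2 * a * of_int i"
  have "of_int i \<le> (x - a * of_int j + a) / (2 * a)" "(x - a * of_int j + a) / (2 * a) < of_int i + 1"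
    unfolding i_def by linarith+
  then have \<xi>: "- a \<le> \<xi>" "\<xi> < a" unfolding \<xi>_def using a by (auto simp: field_simps)
  have key: "\<exists>q\<in>hex_lattice a. dist p q \<le> 2 * a / sqrt 3"
  proof -
    let ?P0 = "(of_int i * (2 * a) + of_int j * a, of_int j * (a * sqrt 3))"
    have d0: "dist p ?P0 = sqrt (\<xi>\<^sup>2 + e\<^sup>2)"
      unfolding p dist_pair2 \<xi>_def e_def h_def by (simp add: algebra_simps)
    have R: "0 \<le> 2 * a / sqrt 3" using a by simp
    show ?thesis
    proof (cases "\<xi> \<ge> 0")
      case True
      show ?thesis
      proof (cases "\<xi> + sqrt 3 * e \<le> 2 * a")
        case True
        then have "\<xi>\<^sup>2 + e\<^sup>2 \<le> (2 * a / sqrt 3)\<^sup>2" using tri[of \<xi> a e] \<open>\<xi> \<ge> 0\<close> \<xi> e by auto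
        then show ?thesis using d0 in_lat[of i a j] real_le_lsqrt[OF R] by metis
      next
        case False
        let ?P1 = "(of_int i * (2 * a) + of_int (j + 1) * a, of_int (j + 1) * (a * sqrt 3))"
        have d1: "dist p ?P1 = sqrt ((a - \<xi>)\<^sup>2 + (h - e)\<^sup>2)"
          unfolding p dist_pair2 \<xi>_def e_def h_def by (simp add: algebra_simps power2_commute)
        have "(a - \<xi>) + sqrt 3 * (h - e) \<le> 2 * a" using False s3h by (simp add: algebra_simps)
        then have "(a - \<xi>)\<^sup>2 + (h - e)\<^sup>2 \<le> (2 * a / sqrt 3)\<^sup>2" using tri[of "a - \<xi>" a "h - e"] \<open>\<xi> \<ge> 0\<close> \<xi> e by auto
        then show ?thesis using d1 in_lat[of i a "j+1"] real_le_lsqrt[OF R] by metis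
      qed
    next
      case False
      show ?thesis
      proof (cases "- \<xi> + sqrt 3 * e \<le> 2 * a")
        case True
        then have "(-\<xi>)\<^sup>2 + e\<^sup>2 \<le> (2 * a / sqrt 3)\<^sup>2" using tri[of "-\<xi>" a e] False \<xi> e by auto
        then show ?thesis using d0 in_lat[of i a j] real_le_lsqrt[OF R] by (metis power2_minus)
      next
        case False2: False
        let ?P1 = "(of_int (i - 1) * (2 * a) + of_int (j + 1) * a, of_int (j + 1) * (a * sqrt 3))"
        have d1: "dist p ?P1 = sqrt ((a + \<xi>)\<^sup>2 + (h - e)\<^sup>2)"
          unfolding p dist_pair2 \<xi>_def e_def h_def by (simp add: algebra_simps power2_commute)
        have "(a + \<xi>) + sqrt 3 * (h - e) \<le> 2 * a" using False2 s3h by (simp add: algebra_simps)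
        then have "(a + \<xi>)\<^sup>2 + (h - e)\<^sup>2 \<le> (2 * a / sqrt 3)\<^sup>2" using tri[of "a + \<xi>" a "h - e"] False \<xi> e by auto
        then show ?thesis using d1 in_lat[of "i - 1" a "j+1"] real_le_lsqrt[OF R] by metis
      qed
    qed
  qed
  then show ?thesis using infdist_le2 by blast
qed

lemma int_ineq: "3 * (1 - 2 * i - j)\<^sup>2 + (1 - 3 * j)\<^sup>2 \<ge> (4::int)"
proof -
  consider "j = 0" | "j = 1" | "j \<ge> 2" | "j \<le> -1" by linarith
  then show ?thesis
  proof cases
    case 1
    have "1 - 2 * i \<noteq> 0" by presburger
    then have "(1 - 2 * i)\<^sup>2 \<ge> 1"
      by (metis int_one_le_iff_zero_less zero_less_power2)
    then show ?thesis using 1 by simp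
  next
    case 2
    then show ?thesis by simp
  next
    case 3
    have "(3 * j - 1)\<^sup>2 \<ge> 5\<^sup>2" by (rule power_mono) (use 3 in auto)
    then have "(1 - 3 * j)\<^sup>2 \<ge> 25" by (simp add: power2_commute)
    moreover have "0 \<le> 3 * (1 - 2 * i - j)\<^sup>2" by simp
    ultimately show ?thesis by linarith
  next
    case 4
    have "(1 - 3 * j)\<^sup>2 \<ge> 4\<^sup>2" by (rule power_mono) (use 4 in auto)
    then have "(1 - 3 * j)\<^sup>2 \<ge> 16" by simp
    moreover have "0 \<le> 3 * (1 - 2 * i - j)\<^sup>2" by simp
    ultimately show ?thesis by linarith
  qed
qed

lemma vertex:
  fixes a :: real
  assumes a: "a > 0"
  shows "infdist (a, a / sqrt 3) (hex_lattice a) \<ge> 2 * a / sqrt 3"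
proof -
  have ne: "hex_lattice a \<noteq> {}" using in_lat by blast
  have "2 * a / sqrt 3 \<le> dist (a, a / sqrt 3) q" if qin: "q \<in> hex_lattice a" for q
  proof -
    obtain i j :: int where q: "q = (of_int i * (2 * a) + of_int j * a, of_int j * (a * sqrt 3))"
      using qin unfolding hex_lattice_def by blast
    have Q: "real_of_int (3 * (1 - 2 * i - j)\<^sup>2 + (1 - 3 * j)\<^sup>2) \<ge> 4" using int_ineq[of i j] by linarith
    have e1: "(a - (of_int i * (2 * a) + of_int j * a))\<^sup>2 = a\<^sup>2 * (real_of_int (1 - 2 * i - j))\<^sup>2"
      by (simp add: power2_eq_square algebra_simps)
    have e2: "(a / sqrt 3 - of_int j * (a * sqrt 3))\<^sup>2 = a\<^sup>2 * (real_of_int (1 - 3 * j))\<^sup>2 / 3"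
      by (simp add: power2_eq_square field_simps)
    have "(2 * a / sqrt 3)\<^sup>2 = a\<^sup>2 * 4 / 3" by (simp add: power_divide power_mult_distrib)
    also have "\<dots> \<le> a\<^sup>2 * real_of_int (3 * (1 - 2 * i - j)\<^sup>2 + (1 - 3 * j)\<^sup>2) / 3"
      using Q a by (intro divide_right_mono mult_left_mono) auto
    also have "\<dots> = (a - (of_int i * (2 * a) + of_int j * a))\<^sup>2 + (a / sqrt 3 - of_int j * (a * sqrt 3))\<^sup>2"
      unfolding e1 e2 by (simp add: algebra_simps)
    finally show ?thesis unfolding q dist_pair2 by (rule real_le_rsqrt)
  qed
  then show ?thesis unfolding infdist_notempty[OF ne] by (intro cINF_greatest ne) auto
qed


lemma torus_proj_alt: "torus_proj a = (\<lambda>p. (cis (2 * pi * ((fst p - fst (snd p) / sqrt 3) / (4 * a))),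
      cis (2 * pi * (fst (snd p) / (2 * a * sqrt 3))), cis (snd (snd p))))"
  by (auto simp: torus_proj_def split: prod.split)

lemma cont_torus_proj: "a \<noteq> 0 \<Longrightarrow> continuous_on UNIV (torus_proj a)"
  unfolding torus_proj_alt by (intro continuous_intros) auto

lemma cis_eqD: "cis A = cis B \<Longrightarrow> \<exists>n::int. A = B + 2 * pi * of_int n"
  using sin_cos_eq_iff[of A B] by (auto simp: complex_eq_iff)

lemma affine_ps: "piecewise_smooth (\<lambda>t. p + t *\<^sub>R v)"
  unfolding piecewise_smooth_def
  apply (rule exI[of _ 1], rule exI[of _ real])
  apply (auto intro!: exI[of _ "\<lambda>_. v"] derivative_eq_intros)
  done

lemma affine_len: "hex_length a (\<lambda>t. p + t *\<^sub>R v) = integral {0..1} (\<lambda>t. hex_speed a (p + t *\<^sub>R v) v)"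
proof -
  have "vector_derivative (\<lambda>t. p + t *\<^sub>R v) (at t) = v" for t
    by (rule vector_derivative_at) (auto intro!: derivative_eq_intros)
  then show ?thesis unfolding hex_length_def by simp
qed

lemma cs2: "u1 * v1 + u2 * v2 \<le> sqrt (u1\<^sup>2 + u2\<^sup>2) * sqrt (v1\<^sup>2 + v2\<^sup>2)"
proof -
  have "(u1 * v1 + u2 * v2)\<^sup>2 \<le> (u1\<^sup>2 + u2\<^sup>2) * (v1\<^sup>2 + v2\<^sup>2)"
  proof -
    have "(u1\<^sup>2 + u2\<^sup>2) * (v1\<^sup>2 + v2\<^sup>2) - (u1 * v1 + u2 * v2)\<^sup>2 = (u1 * v2 - u2 * v1)\<^sup>2"
      by (simp add: power2_eq_square algebra_simps)
    then show ?thesis by (smt (verit) zero_le_power2)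
  qed
  then have A: "sqrt ((u1 * v1 + u2 * v2)\<^sup>2) \<le> sqrt ((u1\<^sup>2 + u2\<^sup>2) * (v1\<^sup>2 + v2\<^sup>2))"
    by (rule real_sqrt_le_mono)
  have B: "sqrt ((u1\<^sup>2 + u2\<^sup>2) * (v1\<^sup>2 + v2\<^sup>2)) = sqrt (u1\<^sup>2 + u2\<^sup>2) * sqrt (v1\<^sup>2 + v2\<^sup>2)"
    by (rule real_sqrt_mult)
  have C: "sqrt ((u1 * v1 + u2 * v2)\<^sup>2) = \<bar>u1 * v1 + u2 * v2\<bar>" by (rule real_sqrt_abs)
  show ?thesis using A B C abs_ge_self[of "u1 * v1 + u2 * v2"] by linarith
qed

lemma int_ineq2:
  fixes m n :: int
  assumes "m \<noteq> 0 \<or> n \<noteq> 0"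
  shows "(2 * m + n)\<^sup>2 + 3 * n\<^sup>2 \<ge> 4"
proof (cases "n = 0")
  case True
  then have "m \<noteq> 0" using assms by simp
  then have "m\<^sup>2 \<ge> 1" by (metis int_one_le_iff_zero_less zero_less_power2)
  then show ?thesis using True by (simp add: power_mult_distrib)
next
  case False
  then have n1: "n\<^sup>2 \<ge> 1" by (metis int_one_le_iff_zero_less zero_less_power2)
  show ?thesis
  proof (cases "2 * m + n = 0")
    case True
    then have "n = - 2 * m" by simp
    then have "n\<^sup>2 = 4 * m\<^sup>2" by (simp add: power_mult_distrib)
    then show ?thesis using n1 True by simp
  next
    case False
    then have "(2 * m + n)\<^sup>2 \<ge> 1" by (metis int_one_le_iff_zero_less zero_less_power2)
    then show ?thesis using n1 by simp
  qed
qed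

lemma cancel2pi: "2 * pi * A = 2 * pi * B + 2 * pi * k \<Longrightarrow> A = B + k"
proof -
  assume "2 * pi * A = 2 * pi * B + 2 * pi * k"
  then have "2 * pi * A = 2 * pi * (B + k)" by (simp only: distrib_left)
  then show ?thesis by simp
qed

lemma lower_bound:
  fixes a :: real
  assumes a: "a > 0" and R: "2 * a / sqrt 3 < pi / 2"
    and ps: "piecewise_smooth \<gamma>" and cl: "torus_proj a (\<gamma> 0) = torus_proj a (\<gamma> 1)"
    and nc: "\<not> homotopic_loops (torus_space a) (torus_proj a \<circ> \<gamma>)
           (linepath (torus_proj a (\<gamma> 0)) (torus_proj a (\<gamma> 0)))"
  shows "min (4 * a) (2 * pi * cos (2 * a / sqrt 3)) \<le> hex_length a \<gamma>"
proof -
  define L where "L = hex_length a \<gamma>"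
  define c where "c = cos (2 * a / sqrt 3)"
  have ne: "\<gamma> 0 \<noteq> \<gamma> 1"
  proof
    assume eq: "\<gamma> 0 = \<gamma> 1"
    have pg: "path \<gamma>" using ps_cont[OF ps] by (simp add: path_def)
    have "homotopic_loops UNIV \<gamma> (linepath (\<gamma> 0) (\<gamma> 0))"
      by (rule homotopic_loops_linear) (use pg eq in \<open>auto simp: pathstart_def pathfinish_def\<close>)
    moreover have "torus_proj a \<in> UNIV \<rightarrow> torus_space a" by (auto simp: torus_space_def)
    ultimately have "homotopic_loops (torus_space a) (torus_proj a \<circ> \<gamma>) (torus_proj a \<circ> linepath (\<gamma> 0) (\<gamma> 0))"
      using homotopic_loops_continuous_image cont_torus_proj a by (metis less_irrefl)
    moreover have "torus_proj a \<circ> linepath (\<gamma> 0) (\<gamma> 0) = linepath (torus_proj a (\<gamma> 0)) (torus_proj a (\<gamma> 0))"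
      by (auto simp: linepath_def o_def algebra_simps)
    ultimately show False using nc by simp
  qed
  obtain x0 y0 z0 where g0: "\<gamma> 0 = (x0, y0, z0)" by (cases "\<gamma> 0") auto
  obtain x1 y1 z1 where g1: "\<gamma> 1 = (x1, y1, z1)" by (cases "\<gamma> 1") auto
  have s3: "sqrt 3 > 0" by simp
  obtain m :: int where m: "2 * pi * ((x1 - y1 / sqrt 3) / (4 * a)) = 2 * pi * ((x0 - y0 / sqrt 3) / (4 * a)) + 2 * pi * m"
    using cis_eqD[of "2 * pi * ((x1 - y1 / sqrt 3) / (4 * a))" "2 * pi * ((x0 - y0 / sqrt 3) / (4 * a))"] cl
    by (auto simp: g0 g1 torus_proj_def)
  obtain n :: int where n: "2 * pi * (y1 / (2 * a * sqrt 3)) = 2 * pi * (y0 / (2 * a * sqrt 3)) + 2 * pi * n"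
    using cis_eqD[of "2 * pi * (y1 / (2 * a * sqrt 3))" "2 * pi * (y0 / (2 * a * sqrt 3))"] cl
    by (auto simp: g0 g1 torus_proj_def)
  obtain l :: int where l: "z1 = z0 + 2 * pi * l"
    using cis_eqD[of z1 z0] cl by (auto simp: g0 g1 torus_proj_def)
  have m': "(x1 - y1 / sqrt 3) / (4 * a) = (x0 - y0 / sqrt 3) / (4 * a) + m"
    by (rule cancel2pi[OF m])
  have n': "y1 / (2 * a * sqrt 3) = y0 / (2 * a * sqrt 3) + n"
    by (rule cancel2pi[OF n])
  have dy: "y1 - y0 = 2 * a * sqrt 3 * n"
    using n' a s3 by (simp add: field_simps)
  have dx0: "x1 - y1 / sqrt 3 = x0 - y0 / sqrt 3 + 4 * a * m"
    using m' a by (simp add: field_simps)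
  have "(y1 - y0) / sqrt 3 = 2 * a * n" using dy by simp
  then have dx: "x1 - x0 = 4 * a * m + 2 * a * n"
    using dx0 by (simp add: diff_divide_distrib algebra_simps)
  have R0: "0 \<le> 2 * a / sqrt 3" using a by simp
  have cpos: "c > 0" unfolding c_def using R R0 by (intro cos_gt_zero_pi) auto
  show ?thesis
  proof (cases "m \<noteq> 0 \<or> n \<noteq> 0")
    case True
    define w1 where "w1 = x1 - x0"
    define w2 where "w2 = y1 - y0"
    define K where "K = sqrt (w1\<^sup>2 + w2\<^sup>2)"
    have ww: "w1\<^sup>2 + w2\<^sup>2 = 4 * a\<^sup>2 * real_of_int ((2 * m + n)\<^sup>2 + 3 * n\<^sup>2)"
      unfolding w1_def w2_def dx dy by (simp add: power2_eq_square algebra_simps)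
    have "real_of_int ((2 * m + n)\<^sup>2 + 3 * n\<^sup>2) \<ge> 4" using int_ineq2[OF True] by linarith
    then have "(4 * a)\<^sup>2 \<le> w1\<^sup>2 + w2\<^sup>2" unfolding ww using a
      by (simp add: power2_eq_square mult_left_mono)
    then have K4: "4 * a \<le> K" unfolding K_def by (rule real_le_rsqrt)
    have Kpos: "K > 0" using K4 a by simp
    have lin: "bounded_linear (\<lambda>v::real\<times>real\<times>real. w1 * fst v + w2 * fst (snd v))"
      unfolding linear_conv_bounded_linear[symmetric] by (auto simp: linear_iff algebra_simps)
    have bd: "w1 * fst v + w2 * fst (snd v) \<le> K * hex_speed a p v" for p and v :: "real\<times>real\<times>real"
    proof -
      have "w1 * fst v + w2 * fst (snd v) \<le> K * sqrt ((fst v)\<^sup>2 + (fst (snd v))\<^sup>2)"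
        unfolding K_def by (rule cs2)
      also have "\<dots> \<le> K * hex_speed a p v"
        unfolding hex_speed_alt using Kpos by (intro mult_left_mono) auto
      finally show ?thesis .
    qed
    have "w1 * x1 + w2 * y1 - (w1 * x0 + w2 * y0) \<le> K * L"
      using length_bound[OF ps lin bd] g0 g1 unfolding L_def by simp
    moreover have "w1 * x1 + w2 * y1 - (w1 * x0 + w2 * y0) = K * K"
    proof -
      have "K * K = w1\<^sup>2 + w2\<^sup>2" unfolding K_def by simp
      moreover have "w1 * x1 + w2 * y1 - (w1 * x0 + w2 * y0) = w1\<^sup>2 + w2\<^sup>2"
        by (simp add: w1_def w2_def power2_eq_square algebra_simps)
      ultimately show ?thesis by simp
    qed
    ultimately have "K * K \<le> K * L" by simp
    then have "K \<le> L" using Kpos by simp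
    then show ?thesis using K4 unfolding L_def by linarith
  next
    case False
    then have "x1 = x0" "y1 = y0" using dx dy by auto
    then have "l \<noteq> 0" using ne g0 g1 l by auto
    then have l1: "\<bar>real_of_int l\<bar> \<ge> 1" by linarith
    define \<sigma> where "\<sigma> = (if l > 0 then 1 else -1 :: real)"
    have sig: "\<sigma> * (z1 - z0) = 2 * pi * \<bar>real_of_int l\<bar>" unfolding \<sigma>_def l by auto
    have \<sigma>1: "\<bar>\<sigma>\<bar> = 1" unfolding \<sigma>_def by auto
    have lin: "bounded_linear (\<lambda>v::real\<times>real\<times>real. \<sigma> * c * snd (snd v))"
      unfolding linear_conv_bounded_linear[symmetric] by (auto simp: linear_iff algebra_simps)
    have bd: "\<sigma> * c * snd (snd v) \<le> 1 * hex_speed a p v" for p and v :: "real\<times>real\<times>real"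
    proof -
      define d where "d = infdist (fst p, fst (snd p)) (hex_lattice a)"
      have "d \<le> 2 * a / sqrt 3" unfolding d_def by (rule cover[OF a])
      moreover have "2 * a / sqrt 3 \<le> pi" using R pi_gt_zero by linarith
      ultimately have cd: "c \<le> cos d" unfolding c_def using infdist_nonneg[of _ "hex_lattice a"]
        by (intro cos_monotone_0_pi_le) (auto simp: d_def)
      have "\<sigma> * c * snd (snd v) \<le> c * \<bar>snd (snd v)\<bar>"
      proof -
        have "\<bar>\<sigma> * snd (snd v)\<bar> = \<bar>snd (snd v)\<bar>" using \<sigma>1 by (simp add: abs_mult)
        then have "\<sigma> * snd (snd v) \<le> \<bar>snd (snd v)\<bar>" using abs_ge_self[of "\<sigma> * snd (snd v)"] by linarith
        then have "c * (\<sigma> * snd (snd v)) \<le> c * \<bar>snd (snd v)\<bar>" using cpos by (intro mult_left_mono) auto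
        then show ?thesis by (simp add: mult_ac)
      qed
      also have "\<dots> \<le> \<bar>cos d\<bar> * \<bar>snd (snd v)\<bar>" using cd cpos by (intro mult_right_mono) auto
      also have "\<dots> = sqrt ((cos d)\<^sup>2 * (snd (snd v))\<^sup>2)" by (simp add: real_sqrt_mult)
      also have "\<dots> \<le> hex_speed a p v" unfolding hex_speed_alt d_def by simp
      finally show ?thesis by simp
    qed
    have "\<sigma> * c * z1 - \<sigma> * c * z0 \<le> 1 * L"
      using length_bound[OF ps lin bd] g0 g1 unfolding L_def by simp
    moreover have "\<sigma> * c * z1 - \<sigma> * c * z0 = c * (2 * pi * \<bar>real_of_int l\<bar>)"
    proof -
      have "\<sigma> * c * z1 - \<sigma> * c * z0 = c * (\<sigma> * (z1 - z0))" by (simp add: algebra_simps)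
      then show ?thesis using sig by simp
    qed
    moreover have "c * (2 * pi) \<le> c * (2 * pi * \<bar>real_of_int l\<bar>)"
      using cpos l1 by (intro mult_left_mono) auto
    ultimately have "c * (2 * pi) \<le> L" by linarith
    then have "2 * pi * c \<le> L" by (simp add: mult_ac)
    then show ?thesis unfolding L_def c_def by linarith
  qed
qed

theorem mainTheorem3:
  fixes a :: real
  assumes "a > 0" and "2 * a / sqrt 3 < pi / 2"
  shows "systole_hex a = min (4 * a) (2 * pi * cos (2 * a / sqrt 3))"
proof -
  note a = assms(1) and R = assms(2)
  define S where "S = {hex_length a \<gamma> | \<gamma>.
      piecewise_smooth \<gamma> \<and>
      torus_proj a (\<gamma> 0) = torus_proj a (\<gamma> 1) \<and>
      \<not> homotopic_loops (torus_space a) (torus_proj a \<circ> \<gamma>)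
           (linepath (torus_proj a (\<gamma> 0)) (torus_proj a (\<gamma> 0)))}"
  define M where "M = min (4 * a) (2 * pi * cos (2 * a / sqrt 3))"
  have lb: "\<And>L. L \<in> S \<Longrightarrow> M \<le> L"
    unfolding S_def M_def using lower_bound[OF a R] by blast
  have sub: "torus_proj a \<in> UNIV \<rightarrow> torus_space a" by (auto simp: torus_space_def)
  define gh where "gh = (\<lambda>t::real. (0::real\<times>real\<times>real) + t *\<^sub>R (4 * a, 0, 0))"
  have gh_t: "gh t = (4 * a * t, 0, 0)" for t by (simp add: gh_def)
  have "hex_length a gh = integral {0..1} (\<lambda>t. hex_speed a (gh t) (4 * a, 0, 0))"
    unfolding gh_def by (rule affine_len)
  also have "\<dots> = 4 * a"
  proof -
    have "(4*a)\<^sup>2 = 16*a\<^sup>2" by (simp add: power2_eq_square)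
    then have "sqrt (16*a\<^sup>2) = \<bar>4*a\<bar>" by (metis real_sqrt_abs)
    then show ?thesis using a by (simp add: hex_speed_def gh_t)
  qed
  finally have lh: "hex_length a gh = 4 * a" .
  have "hex_length a gh \<in> S"
    unfolding S_def
  proof (intro CollectI exI conjI)
    show "piecewise_smooth gh" unfolding gh_def by (rule affine_ps)
    show "torus_proj a (gh 0) = torus_proj a (gh 1)" using a by (simp add: gh_t torus_proj_def)
    show "\<not> homotopic_loops (torus_space a) (torus_proj a \<circ> gh)
           (linepath (torus_proj a (gh 0)) (torus_proj a (gh 0)))"
    proof
      assume h: "homotopic_loops (torus_space a) (torus_proj a \<circ> gh)
           (linepath (torus_proj a (gh 0)) (torus_proj a (gh 0)))"
      show False
      proof (rule circle_noncontr[OF h, of fst])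
        show "continuous_on (torus_space a) fst" by (intro continuous_intros)
        show "fst \<in> torus_space a \<rightarrow> - {0}" by (auto simp: torus_space_def torus_proj_def split: prod.split)
        show "fst ((torus_proj a \<circ> gh) t) = cis (2 * pi * t)" for t
          using a by (simp add: gh_t torus_proj_def mult.assoc)
      qed
    qed
  qed rule
  then have hS: "4 * a \<in> S" using lh by simp
  define gv where "gv = (\<lambda>t::real. (a, a / sqrt 3, 0::real) + t *\<^sub>R (0, 0, 2 * pi))"
  have gv_t: "gv t = (a, a / sqrt 3, 2 * pi * t)" for t by (simp add: gv_def)
  have inf: "infdist (a, a / sqrt 3) (hex_lattice a) = 2 * a / sqrt 3"
    using cover[OF a, of "(a, a / sqrt 3)"] vertex[OF a] by linarith
  have cpos: "cos (2 * a / sqrt 3) > 0"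
  proof (rule cos_gt_zero_pi)
    have "0 < 2 * a / sqrt 3" using a by simp
    then show "- (pi / 2) < 2 * a / sqrt 3" using pi_gt_zero by linarith
  qed (use R in auto)
  have "hex_length a gv = integral {0..1} (\<lambda>t. hex_speed a (gv t) (0, 0, 2 * pi))"
    unfolding gv_def by (rule affine_len)
  also have "\<dots> = 2 * pi * cos (2 * a / sqrt 3)"
    using cpos by (simp add: hex_speed_def gv_t inf real_sqrt_mult)
  finally have lv: "hex_length a gv = 2 * pi * cos (2 * a / sqrt 3)" .
  have "hex_length a gv \<in> S"
    unfolding S_def
  proof (intro CollectI exI conjI)
    show "piecewise_smooth gv" unfolding gv_def by (rule affine_ps)
    show "torus_proj a (gv 0) = torus_proj a (gv 1)" using a by (simp add: gv_t torus_proj_def)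
    show "\<not> homotopic_loops (torus_space a) (torus_proj a \<circ> gv)
           (linepath (torus_proj a (gv 0)) (torus_proj a (gv 0)))"
    proof
      assume h: "homotopic_loops (torus_space a) (torus_proj a \<circ> gv)
           (linepath (torus_proj a (gv 0)) (torus_proj a (gv 0)))"
      show False
      proof (rule circle_noncontr[OF h, of "\<lambda>q. snd (snd q)"])
        show "continuous_on (torus_space a) (\<lambda>q. snd (snd q))" by (intro continuous_intros)
        show "(\<lambda>q. snd (snd q)) \<in> torus_space a \<rightarrow> - {0}" by (auto simp: torus_space_def torus_proj_def split: prod.split)
        show "snd (snd ((torus_proj a \<circ> gv) t)) = cis (2 * pi * t)" for t
          by (simp add: gv_t torus_proj_def)
      qed
    qed
  qed rule
  then have vS: "2 * pi * cos (2 * a / sqrt 3) \<in> S" using lv by simp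
  have bdd: "bdd_below S" using lb by (auto simp: bdd_below_def)
  have "Inf S \<le> 4 * a" using cInf_lower[OF hS bdd] .
  moreover have "Inf S \<le> 2 * pi * cos (2 * a / sqrt 3)" using cInf_lower[OF vS bdd] .
  moreover have "M \<le> Inf S" using hS lb by (intro cInf_greatest) auto
  ultimately have "Inf S = M" unfolding M_def by linarith
  then show ?thesis unfolding systole_hex_def S_def M_def by simp
qed

end
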